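(* Let $(X,\le)$ be a partially ordered set and $\tau$ a topology on $X$. Assume that: (i) every nonempty $\tau$-open set contains a diamond $J(a,b):=\{c\in X:a\le c\le b\}$ with nonempty $\tau$-interior; (ii) for any sequences $(a_n),(b_n)\subset X$ with $a_n\le a_{n+1}\le b_{n+1}\le b_n$ for all $n\in\mathbb N$, there is $c\in X$ with $a_n\le c\le b_n$ for all $n$. Then for every sequence $(U_n)$ of $\tau$-open $\tau$-dense subsets of $X$, the set $\bigcap_nU_n$ is $\tau$-dense. *)

theory Defs
  imports "HOL-Analysis.Analysis"
begin

definition diamond :: "'a set \<Rightarrow> ('a \<Rightarrow> 'a \<Rightarrow> bool) \<Rightarrow> 'a \<Rightarrow> 'a \<Rightarrow> 'a set" where
  "diamond X le a b = {c \<in> X. le a c \<and> le c b}"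

definition partial_order_on_set :: "'a set \<Rightarrow> ('a \<Rightarrow> 'a \<Rightarrow> bool) \<Rightarrow> bool" where
  "partial_order_on_set X le \<longleftrightarrow>
     (\<forall>x\<in>X. le x x) \<and>
     (\<forall>x\<in>X. \<forall>y\<in>X. le x y \<and> le y x \<longrightarrow> x = y) \<and>
     (\<forall>x\<in>X. \<forall>y\<in>X. \<forall>z\<in>X. le x y \<and> le y z \<longrightarrow> le x z)"

definition dense_in :: "'a topology \<Rightarrow> 'a set \<Rightarrow> bool" where
  "dense_in T S \<longleftrightarrow> S \<subseteq> topspace T \<and> T closure_of S = topspace T"

end

theory Submission
  imports Defs
begin

theorem mainTheorem17:
  fixes T :: "'a topology" and le :: "'a \<Rightarrow> 'a \<Rightarrow> bool"
  assumes po: "partial_order_on_set (topspace T) le"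
    and diam: "\<And>U. openin T U \<Longrightarrow> U \<noteq> {} \<Longrightarrow>
        \<exists>a\<in>topspace T. \<exists>b\<in>topspace T. diamond (topspace T) le a b \<subseteq> U \<and>
           T interior_of (diamond (topspace T) le a b) \<noteq> {}"
    and nested: "\<And>a b :: nat \<Rightarrow> 'a. (\<forall>n. a n \<in> topspace T \<and> b n \<in> topspace T) \<Longrightarrow>
        (\<forall>n. le (a n) (a (Suc n)) \<and> le (a (Suc n)) (b (Suc n)) \<and> le (b (Suc n)) (b n)) \<Longrightarrow>
        \<exists>c\<in>topspace T. \<forall>n. le (a n) c \<and> le c (b n)"
    and U: "\<And>n::nat. openin T (U n) \<and> dense_in T (U n)"
  shows "dense_in T (\<Inter>n. U n)"
proof -
  define X where "X = topspace T"
  define J where "J = (\<lambda>p. diamond X le (fst p) (snd p))"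
  define good where "good = (\<lambda>V p. fst p \<in> X \<and> snd p \<in> X \<and> J p \<subseteq> V \<and> T interior_of J p \<noteq> {})"
  define P where "P = (\<lambda>V. SOME p. good V p)"
  have PG: "good V (P V)" if "openin T V" "V \<noteq> {}" for V
  proof -
    from diam[OF that] obtain a b where "good V (a,b)"
      unfolding good_def J_def X_def by auto
    then show ?thesis unfolding P_def by (rule someI)
  qed
  have meet: "V \<inter> U n \<noteq> {}" if "openin T V" "V \<noteq> {}" for V n
    using U[of n] that unfolding dense_in_def dense_intersects_open by blast
  have refl: "\<And>x. x \<in> X \<Longrightarrow> le x x" and trans: "\<And>x y z. x \<in> X \<Longrightarrow> y \<in> X \<Longrightarrow> z \<in> X \<Longrightarrow> le x y \<Longrightarrow> le y z \<Longrightarrow> le x z"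
    using po unfolding partial_order_on_set_def X_def by blast+
  have ab: "le (fst p) (snd p) \<and> fst p \<in> J p \<and> snd p \<in> J p" if "good V p" for V p
  proof -
    have X: "fst p \<in> X" "snd p \<in> X" using that unfolding good_def by auto
    have "T interior_of J p \<subseteq> J p" by (rule interior_of_subset)
    with that have "J p \<noteq> {}" unfolding good_def by auto
    then obtain c where "c \<in> X" "le (fst p) c" "le c (snd p)" unfolding J_def diamond_def by auto
    then have "le (fst p) (snd p)" using trans X by blast
    then show ?thesis using refl X unfolding J_def diamond_def by auto
  qed
  have "\<Inter>(range U) \<inter> W \<noteq> {}" if W: "openin T W" "W \<noteq> {}" for W
  proof -
    define f where "f = rec_nat (P (W \<inter> U 0)) (\<lambda>n p. P (T interior_of J p \<inter> U (Suc n)))"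
    have f0: "f 0 = P (W \<inter> U 0)" and fS: "\<And>n. f (Suc n) = P (T interior_of J (f n) \<inter> U (Suc n))"
      unfolding f_def by simp_all
    have G: "good (U n \<inter> W) (f n) \<and> (\<forall>m\<le>n. J (f n) \<subseteq> J (f m))" for n
    proof (induction n)
      case 0
      have "good (W \<inter> U 0) (f 0)" unfolding f0
        apply (rule PG) using W U[of 0] meet[OF W, of 0] by auto
      then show ?case unfolding good_def by auto
    next
      case (Suc n)
      have o: "openin T (T interior_of J (f n))" by simp
      have ne: "T interior_of J (f n) \<noteq> {}" using Suc unfolding good_def by blast
      have g: "good (T interior_of J (f n) \<inter> U (Suc n)) (f (Suc n))" unfolding fS
        apply (rule PG) using o U[of "Suc n"] meet[OF o ne, of "Suc n"] by auto
      have "T interior_of J (f n) \<subseteq> J (f n)" by (rule interior_of_subset)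
      then have sub: "J (f (Suc n)) \<subseteq> J (f n)" using g unfolding good_def by blast
      have "J (f n) \<subseteq> W" using Suc unfolding good_def by blast
      then have "good (U (Suc n) \<inter> W) (f (Suc n))" using g sub unfolding good_def by blast
      moreover have "\<forall>m\<le>Suc n. J (f (Suc n)) \<subseteq> J (f m)"
        using Suc sub by (auto simp: le_Suc_eq)
      ultimately show ?case by blast
    qed
    define a where "a = (\<lambda>n. fst (f n))"
    define b where "b = (\<lambda>n. snd (f n))"
    have inX: "\<forall>n. a n \<in> topspace T \<and> b n \<in> topspace T"
      using G unfolding good_def a_def b_def X_def by blast
    have chain: "\<forall>n. le (a n) (a (Suc n)) \<and> le (a (Suc n)) (b (Suc n)) \<and> le (b (Suc n)) (b n)"
    proof
      fix n
      have s: "J (f (Suc n)) \<subseteq> J (f n)" using G[of "Suc n"] by auto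
      have h: "le (a (Suc n)) (b (Suc n)) \<and> a (Suc n) \<in> J (f (Suc n)) \<and> b (Suc n) \<in> J (f (Suc n))"
        using ab G[of "Suc n"] unfolding a_def b_def by blast
      then have "a (Suc n) \<in> J (f n)" "b (Suc n) \<in> J (f n)" using s by auto
      then show "le (a n) (a (Suc n)) \<and> le (a (Suc n)) (b (Suc n)) \<and> le (b (Suc n)) (b n)"
        using h unfolding J_def diamond_def a_def b_def by auto
    qed
    obtain c where c: "c \<in> topspace T" "\<forall>n. le (a n) c \<and> le c (b n)"
      using nested[OF inX chain] by blast
    have "c \<in> J (f n)" for n using c unfolding J_def diamond_def a_def b_def X_def by auto
    then have "c \<in> U n \<inter> W" for n using G[of n] unfolding good_def by blast
    then show ?thesis by blast
  qed
  moreover have "\<Inter>(range U) \<subseteq> topspace T"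
    using U[of 0] unfolding dense_in_def by blast
  ultimately show ?thesis unfolding dense_in_def dense_intersects_open by blast
qed

end
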